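(* Let $\mathbb{H}$ denote the ring of real quaternions with its usual norm $|\cdot|$, and let $S$ be a dense subsemigroup of $(\mathbb{H},+)$ such that $S\cap\mathbb{H}$ is a subsemigroup of $(\mathbb{H}\setminus\{0\},\cdot)$. Let $B_d(1)=\{x\in\mathbb{H}:|x|<1\}$. (1) If $A\subseteq S$ is an IP set near $0$, then $sA=\{sa:a\in A\}$ is an IP set near $0$ for every $s\in S\cap B_d(1)\setminus\{0\}$. (2) If $A\subseteq S$ is an IP$^*$ set near $0$ in $(S,+)$, then both $s^{-1}A=\{t\in S: st\in A\}$ and $As^{-1}=\{t\in S: ts\in A\}$ are IP$^*$ sets near $0$ for every $s\in S\cap B_d(1)\setminus\{0\}$.
   Context: For a sequence $\langle x_n\rangle_{n=1}^\infty$, $FS(\langle x_n\rangle_{n=1}^\infty)=\{\sum_{n\in F}x_n: F \text{ a finite nonempty subset of }\mathbb{N}\}$. A subset $A$ of $S$ is an IP set near $0$ if there exists a sequence $\langle x_n\rangle_{n=1}^\infty$ in $S$ such that $\sum_{n=1}^\infty x_n$ converges and $FS(\langle x_n\rangle_{n=1}^\infty)\subseteq A$. A subset $D$ of $S$ is an IP$^*$ set near $0$ if for every subset $C$ of $S$ which is an IP set near $0$, $C\cap D$ is an IP set near $0$. *)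

theory Defs
  imports "HOL-Analysis.Analysis"
begin

text \<open>Real quaternions, represented as real^4 (components 1,2,3,4 = real part, i, j, k);
  the Euclidean norm of real^4 is the usual quaternion norm, addition is vector addition,
  and the Hamilton product is defined explicitly.\<close>

type_synonym quat = "real^4"

definition qmult :: "quat \<Rightarrow> quat \<Rightarrow> quat" (infixl "\<odot>" 70) where
  "p \<odot> q = vector
     [p$1*q$1 - p$2*q$2 - p$3*q$3 - p$4*q$4,
      p$1*q$2 + p$2*q$1 + p$3*q$4 - p$4*q$3,
      p$1*q$3 - p$2*q$4 + p$3*q$1 + p$4*q$2,
      p$1*q$4 + p$2*q$3 - p$3*q$2 + p$4*q$1]"

definition FS :: "(nat \<Rightarrow> 'a::comm_monoid_add) \<Rightarrow> 'a set" where
  "FS x = {sum x F | F. finite F \<and> F \<noteq> {}}"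

definition IP_near0 :: "'a::{comm_monoid_add, topological_space} set \<Rightarrow> 'a set \<Rightarrow> bool" where
  "IP_near0 S A \<longleftrightarrow> (\<exists>x. (\<forall>n. x n \<in> S) \<and> summable x \<and> FS x \<subseteq> A)"

definition IPstar_near0 :: "'a::{comm_monoid_add, topological_space} set \<Rightarrow> 'a set \<Rightarrow> bool" where
  "IPstar_near0 S D \<longleftrightarrow> (\<forall>C. C \<subseteq> S \<longrightarrow> IP_near0 S C \<longrightarrow> IP_near0 S (C \<inter> D))"

end

theory Submission
  imports Defs
begin

lemma vector_4q:
 "(vector [a,b,c,d] :: real^4)$1 = a"
 "(vector [a,b,c,d] :: real^4)$2 = b"
 "(vector [a,b,c,d] :: real^4)$3 = c"
 "(vector [a,b,c,d] :: real^4)$4 = d"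
  unfolding vector_def by simp_all

lemmas qm = qmult_def vector_4q

lemma lin_left: "bounded_linear (\<lambda>q. s \<odot> q)"
  unfolding linear_conv_bounded_linear[symmetric]
  by (rule linearI) (simp_all add: vec_eq_iff forall_4 qm algebra_simps)

lemma lin_right: "bounded_linear (\<lambda>q. q \<odot> s)"
  unfolding linear_conv_bounded_linear[symmetric]
  by (rule linearI) (simp_all add: vec_eq_iff forall_4 qm algebra_simps)

definition qconj :: "quat \<Rightarrow> quat" where
  "qconj s = vector [s$1, - s$2, - s$3, - s$4]"

definition qn :: "quat \<Rightarrow> real" where
  "qn s = s$1^2 + s$2^2 + s$3^2 + s$4^2"

lemma qn_nz: "s \<noteq> 0 \<Longrightarrow> qn s \<noteq> 0"
proof
  assume "s \<noteq> 0" "qn s = 0"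
  hence "s$1 = 0 \<and> s$2 = 0 \<and> s$3 = 0 \<and> s$4 = 0" unfolding qn_def
    by (smt (verit) zero_le_power2 power2_eq_square mult_eq_0_iff)
  thus False using \<open>s \<noteq> 0\<close> by (simp add: vec_eq_iff forall_4)
qed

lemma inv_left: "qconj s \<odot> (s \<odot> t) = qn s *\<^sub>R t"
  by (simp add: vec_eq_iff forall_4 qm qconj_def qn_def algebra_simps power2_eq_square)

lemma inv_right: "(t \<odot> s) \<odot> qconj s = qn s *\<^sub>R t"
  by (simp add: vec_eq_iff forall_4 qm qconj_def qn_def algebra_simps power2_eq_square)

lemma FS_sum: "linear f \<Longrightarrow> FS (f \<circ> x) = f ` FS x"
  unfolding FS_def by (auto simp: linear_sum[of f, symmetric] comp_def)

lemma gen_IP: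
  fixes f :: "'a::real_normed_vector \<Rightarrow> 'a"
  assumes bl: "bounded_linear f" and fS: "\<And>t. t \<in> S \<Longrightarrow> f t \<in> S"
    and AS: "A \<subseteq> S" and ip: "IP_near0 S A"
  shows "IP_near0 S (f ` A)"
proof -
  obtain x where x: "\<forall>n. x n \<in> S" "summable x" "FS x \<subseteq> A" using ip unfolding IP_near0_def by blast
  have "FS (f \<circ> x) \<subseteq> f ` A" using FS_sum[of f x] bl x(3) bounded_linear.linear by blast
  moreover have "summable (f \<circ> x)" using bounded_linear.summable[OF bl x(2)] by (simp add: comp_def)
  moreover have "\<forall>n. (f \<circ> x) n \<in> S" using x(1) fS by simp
  ultimately show ?thesis unfolding IP_near0_def by blast
qed

lemma FS_single: "x n \<in> FS x"
  unfolding FS_def by (rule CollectI, rule exI[of _ "{n}"]) simp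

lemma gen_IPstar:
  fixes f :: "'a::real_normed_vector \<Rightarrow> 'a"
  assumes bl: "bounded_linear f" and fS: "\<And>t. t \<in> S \<Longrightarrow> f t \<in> S"
    and bg: "bounded_linear g" and gf: "\<And>t. g (f t) = t"
    and ips: "IPstar_near0 S A"
  shows "IPstar_near0 S {t \<in> S. f t \<in> A}"
  unfolding IPstar_near0_def
proof (intro allI impI)
  fix C assume CS: "C \<subseteq> S" and ipC: "IP_near0 S C"
  have "f ` C \<subseteq> S" using CS fS by auto
  moreover have "IP_near0 S (f ` C)" using gen_IP[OF bl fS CS ipC] .
  ultimately have "IP_near0 S (f ` C \<inter> A)" using ips unfolding IPstar_near0_def by blast
  then obtain y where y: "\<forall>n. y n \<in> S" "summable y" "FS y \<subseteq> f ` C \<inter> A"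
    unfolding IP_near0_def by blast
  have lg: "linear g" using bg bounded_linear.linear by blast
  have "FS (g \<circ> y) \<subseteq> C \<inter> {t \<in> S. f t \<in> A}"
  proof
    fix z assume "z \<in> FS (g \<circ> y)"
    then obtain w where w: "w \<in> FS y" "z = g w" using FS_sum[OF lg] by blast
    then obtain c where c: "c \<in> C" "w = f c" "w \<in> A" using y(3) by blast
    show "z \<in> C \<inter> {t \<in> S. f t \<in> A}" using c w gf CS by auto
  qed
  moreover have "summable (g \<circ> y)" using bounded_linear.summable[OF bg y(2)] by (simp add: comp_def)
  moreover have "\<forall>n. (g \<circ> y) n \<in> S"
  proof
    fix n
    obtain c where "c \<in> C" "y n = f c" using y(3) FS_single[of y n] by blast
    thus "(g \<circ> y) n \<in> S" using gf CS by auto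
  qed
  ultimately show "IP_near0 S (C \<inter> {t \<in> S. f t \<in> A})" unfolding IP_near0_def by blast
qed

theorem lemma2p3:
  fixes S :: "quat set"
  assumes dense: "closure S = UNIV"
    and add_closed: "\<And>a b. a \<in> S \<Longrightarrow> b \<in> S \<Longrightarrow> a + b \<in> S"
    and nonzero: "0 \<notin> S"
    and mult_closed: "\<And>a b. a \<in> S \<Longrightarrow> b \<in> S \<Longrightarrow> a \<odot> b \<in> S"
  shows "(\<forall>A s. A \<subseteq> S \<and> IP_near0 S A \<and> s \<in> S \<and> norm s < 1 \<and> s \<noteq> 0
             \<longrightarrow> IP_near0 S ((\<lambda>a. s \<odot> a) ` A))
       \<and> (\<forall>A s. A \<subseteq> S \<and> IPstar_near0 S A \<and> s \<in> S \<and> norm s < 1 \<and> s \<noteq> 0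
             \<longrightarrow> IPstar_near0 S {t \<in> S. s \<odot> t \<in> A} \<and> IPstar_near0 S {t \<in> S. t \<odot> s \<in> A})"
proof (intro conjI allI impI)
  fix A s assume h: "A \<subseteq> S \<and> IP_near0 S A \<and> s \<in> S \<and> norm s < 1 \<and> s \<noteq> 0"
  show "IP_near0 S ((\<lambda>a. s \<odot> a) ` A)"
    using gen_IP[OF lin_left, of S s A] h mult_closed by blast
next
  fix A s assume h: "A \<subseteq> S \<and> IPstar_near0 S A \<and> s \<in> S \<and> norm s < 1 \<and> s \<noteq> 0"
  have nz: "qn s \<noteq> 0" using h qn_nz by blast
  have bg1: "bounded_linear (\<lambda>q. (1 / qn s) *\<^sub>R (qconj s \<odot> q))"
    using bounded_linear_compose[OF bounded_linear_scaleR_right lin_left] by (simp add: comp_def)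
  have bg2: "bounded_linear (\<lambda>q. (1 / qn s) *\<^sub>R (q \<odot> qconj s))"
    using bounded_linear_compose[OF bounded_linear_scaleR_right lin_right] by (simp add: comp_def)
  show "IPstar_near0 S {t \<in> S. s \<odot> t \<in> A}"
    by (rule gen_IPstar[OF lin_left _ bg1]) (use h mult_closed nz inv_left in auto)
  show "IPstar_near0 S {t \<in> S. t \<odot> s \<in> A}"
    by (rule gen_IPstar[OF lin_right _ bg2]) (use h mult_closed nz inv_right in auto)
qed

end
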